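(* Let $p$ be an odd prime, $\mathcal O$ the ring of integers of a finite extension of $\mathbb Q_p$, and integers $0\le s\le r\le g$. Then (1) $\mathrm{Fil}^{r,s}(V_g(\mathcal O))$ is stable under the action of $S_0(p)$; (2) there is an isomorphism of $S_0(p)$-modules $$\mathrm{Fil}^{r,s}(V_g(\mathcal O))/\mathrm{Fil}^{r,s+1}(V_g(\mathcal O))\cong\big(\mathcal O/p\mathcal O(a^{g-2r+2s})\big)(r-s),$$ and this quotient is generated by the image of the monomial $p^sX^{r-s}Y^{g-r+s}$.
   Context: $V_g(\mathcal O)$: homogeneous degree-$g$ polynomials in $X,Y$ over $\mathcal O$, with right action $(P|\gamma)(X,Y)=P(dX-cY,-bX+aY)$ for $\gamma=\begin{pmatrix}a&b\\c&d\end{pmatrix}$. $S_0(p)=\{\begin{pmatrix}a&b\\c&d\end{pmatrix}\in M_2(\mathbb Z):ad-bc\ne0,\ p\mid c,\ p\nmid a\}$. $\mathrm{Fil}^r=\mathrm{Fil}^r(V_g(\mathcal O))=\{\sum_{j=0}^gb_jX^jY^{g-j}:p^{r-j}\mid b_j\text{ for }0\le j\le r-1\}$, and for $0\le s\le r+1$, $\mathrm{Fil}^{r,s}=\{\sum b_jX^jY^{g-j}\in\mathrm{Fil}^r:p^{r-j+1}\mid b_j\text{ for }r+1-s\le j\le r\}$ (so $\mathrm{Fil}^{r,0}=\mathrm{Fil}^r$ and $\mathrm{Fil}^{r,r+1}=\mathrm{Fil}^{r+1}$). $\big(\mathcal O/p\mathcal O(a^j)\big)(m)$ denotes $\mathcal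 O/p\mathcal O$ on which $\gamma=\begin{pmatrix}a&b\\c&d\end{pmatrix}\in S_0(p)$ acts by multiplication by $\det(\gamma)^m a^j$. *)

theory Defs
  imports "HOL-Computational_Algebra.Polynomial" "HOL-Computational_Algebra.Primes"
begin

text \<open>The ring O: ring of integers of a finite extension of Q_p, characterised as a
  p-adically complete discrete valuation ring of characteristic 0 with finite residue
  field of characteristic p (uniformizer pi).\<close>
definition padic_integer_ring :: "nat \<Rightarrow> 'a::idom itself \<Rightarrow> bool" where
  "padic_integer_ring p T \<longleftrightarrow>
     inj (of_nat :: nat \<Rightarrow> 'a) \<and>
     (\<exists>pi::'a. pi \<noteq> 0 \<and> \<not> pi dvd 1 \<and>
        (\<forall>x. x \<noteq> 0 \<longrightarrow> (\<exists>u n. u dvd 1 \<and> x = u * pi ^ n)) \<and>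
        finite (range (\<lambda>x. {y. pi dvd (x - y)})) \<and>
        pi dvd of_nat p \<and>
        (\<forall>f::nat \<Rightarrow> 'a. (\<forall>n. pi ^ n dvd (f (Suc n) - f n)) \<longrightarrow>
            (\<exists>L. \<forall>n. pi ^ n dvd (L - f n))))"

text \<open>Homogeneous degree-g forms sum_j b_j X^j Y^(g-j) are represented by their
  coefficient functions b :: nat => 'a, with b j = 0 for j > g.\<close>
definition Vg :: "nat \<Rightarrow> (nat \<Rightarrow> 'a::comm_ring_1) set" where
  "Vg g = {b. \<forall>j>g. b j = 0}"

text \<open>Right action (P|gamma)(X,Y) = P(dX - cY, -bX + aY), computed via dehomogenisation
  Y = 1: the coefficient of X^k Y^(g-k) of P|gamma is the X^k-coefficient of
  sum_j b_j (dX - c)^j (a - bX)^(g-j).\<close>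
definition form_act :: "nat \<Rightarrow> int \<times> int \<times> int \<times> int \<Rightarrow> (nat \<Rightarrow> 'a::comm_ring_1) \<Rightarrow> nat \<Rightarrow> 'a" where
  "form_act g \<gamma> P = (case \<gamma> of (a, b, c, d) \<Rightarrow>
     (\<lambda>k. if k \<le> g then
        coeff (\<Sum>j\<le>g. smult (P j) ([:- of_int c, of_int d:] ^ j * [:of_int a, - of_int b:] ^ (g - j))) k
      else 0))"

text \<open>gamma = (a, b, c, d) stands for the matrix [[a, b], [c, d]].\<close>
definition S0 :: "nat \<Rightarrow> (int \<times> int \<times> int \<times> int) set" where
  "S0 p = {(a, b, c, d). a * d - b * c \<noteq> 0 \<and> int p dvd c \<and> \<not> int p dvd a}"

definition FilR :: "nat \<Rightarrow> nat \<Rightarrow> nat \<Rightarrow> (nat \<Rightarrow> 'a::comm_ring_1) set" where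
  "FilR p g r = {b \<in> Vg g. \<forall>j. j < r \<longrightarrow> (of_nat p) ^ (r - j) dvd b j}"

definition FilRS :: "nat \<Rightarrow> nat \<Rightarrow> nat \<Rightarrow> nat \<Rightarrow> (nat \<Rightarrow> 'a::comm_ring_1) set" where
  "FilRS p g r s = {b \<in> FilR p g r.
      \<forall>j. r + 1 - s \<le> j \<and> j \<le> r \<longrightarrow> (of_nat p) ^ (r - j + 1) dvd b j}"

definition cong_p :: "nat \<Rightarrow> 'a::comm_ring_1 \<Rightarrow> 'a \<Rightarrow> bool" where
  "cong_p p x y \<longleftrightarrow> of_nat p dvd (x - y)"

end

theory Submission
  imports Defs
begin

definition fr :: "nat \<Rightarrow> nat \<Rightarrow> nat \<Rightarrow> nat" where
 "fr r s j = (if j < r+1-s then r - j else if j \<le> r then r - j + 1 else 0)"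

lemma fr_ineq: "s \<le> r \<Longrightarrow> fr r s k \<le> fr r s j + (j - k)"
  unfolding fr_def by auto

lemma fr_ineq2: "s \<le> r \<Longrightarrow> j \<noteq> r - s \<Longrightarrow> s + 1 \<le> fr r s j + (j - (r - s))"
  unfolding fr_def by auto

lemma fr_diag: "s \<le> r \<Longrightarrow> fr r s (r - s) = s"
  unfolding fr_def by auto

lemma FilRS_alt:
  assumes "s \<le> r + 1"
  shows "FilRS p g r s = {b \<in> Vg g. \<forall>j. (of_nat p::'a::comm_ring_1)^(fr r s j) dvd b j}"
proof -
  have "((\<forall>j. j < r \<longrightarrow> q^(r-j) dvd b j) \<and> (\<forall>j. r+1-s \<le> j \<and> j \<le> r \<longrightarrow> q^(r-j+1) dvd b j))
     \<longleftrightarrow> (\<forall>j. q^(fr r s j) dvd b j)" for b :: "nat \<Rightarrow> 'a" and q :: 'a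
  proof safe
    fix j assume A: "\<forall>j<r. q^(r-j) dvd b j" and B: "\<forall>j. r+1-s \<le> j \<and> j \<le> r \<longrightarrow> q^(r-j+1) dvd b j"
    show "q^(fr r s j) dvd b j"
    proof (cases "j < r")
      case True thus ?thesis using A B unfolding fr_def by auto
    next
      case False thus ?thesis using B B[rule_format, of r] assms unfolding fr_def by auto
    qed
  next
    fix j assume C: "\<forall>j. q^(fr r s j) dvd b j"
    { assume "j < r"
      have "q^(r-j) dvd q^(fr r s j)" by (rule le_imp_power_dvd) (use \<open>j<r\<close> in \<open>auto simp: fr_def\<close>)
      thus "q^(r-j) dvd b j" using C dvd_trans by blast }
    { assume "r+1-s \<le> j" "j \<le> r"
      have "q^(r-j+1) dvd q^(fr r s j)" by (rule le_imp_power_dvd) (use \<open>r+1-s \<le> j\<close> \<open>j \<le> r\<close> in \<open>auto simp: fr_def\<close>)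
      thus "q^(r-j+1) dvd b j" using C dvd_trans by blast }
  qed
  thus ?thesis unfolding FilRS_def FilR_def by auto
qed

lemma coeff_U_dvd:
  fixes q u d :: "'a::comm_ring_1"
  assumes "q dvd u"
  shows "q^(j-k) dvd coeff ([:u, d:]^j * W) k"
proof (induction j arbitrary: k)
  case 0 thus ?case by simp
next
  case (Suc j)
  define Q where "Q = [:u, d:]^j * W"
  have e0: "[:u, d:]^Suc j * W = [:u, d:] * Q"
    by (simp only: Q_def power_Suc mult.assoc)
  have e: "[:u, d:]^Suc j * W = smult u Q + pCons 0 (smult d Q)"
    unfolding e0 by simp
  show ?case
  proof (cases k)
    case 0
    have "q * q^j dvd u * coeff Q 0" using Suc[of 0] assms by (simp add: Q_def mult_dvd_mono)
    thus ?thesis using 0 e by simp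
  next
    case (Suc k')
    have h1: "q^(j-k') dvd u * coeff Q (Suc k')"
    proof -
      have "q^(j-k') dvd q^(Suc (j - Suc k'))" by (rule le_imp_power_dvd) auto
      also have "\<dots> dvd u * coeff Q (Suc k')" using Suc.IH[of "Suc k'"] assms
        by (simp add: Q_def mult_dvd_mono)
      finally show ?thesis .
    qed
    have h2: "q^(j-k') dvd d * coeff Q k'" using Suc.IH[of k'] by (simp add: Q_def)
    show ?thesis using e h1 h2 Suc by simp
  qed
qed

lemma coeff_U_diag:
  fixes q u d :: "'a::comm_ring_1"
  assumes "q dvd u"
  shows "q dvd (coeff ([:u, d:]^j * W) j - d^j * coeff W 0)"
proof (induction j)
  case 0 thus ?case by simp
next
  case (Suc j)
  define Q where "Q = [:u, d:]^j * W"
  have e0: "[:u, d:]^Suc j * W = [:u, d:] * Q"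
    by (simp only: Q_def power_Suc mult.assoc)
  have e: "[:u, d:]^Suc j * W = smult u Q + pCons 0 (smult d Q)"
    unfolding e0 by simp
  have "coeff ([:u, d:]^Suc j * W) (Suc j) - d^Suc j * coeff W 0
      = u * coeff Q (Suc j) + d * (coeff Q j - d^j * coeff W 0)"
    using e by (simp add: algebra_simps)
  thus ?case using Suc assms by (simp add: Q_def)
qed

lemma dvd_power_diff:
  fixes q x y :: "'a::comm_ring_1"
  assumes "q dvd x - y" shows "q dvd x^n - y^n"
proof (induction n)
  case 0 thus ?case by simp
next
  case (Suc n)
  have "x^Suc n - y^Suc n = x * (x^n - y^n) + y^n * (x - y)" by (simp add: algebra_simps)
  thus ?case using Suc assms by simp
qed


lemma fr_succ: "s \<le> r \<Longrightarrow> fr r (s+1) j = (if j = r - s then s + 1 else fr r s j)"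
  unfolding fr_def by auto

lemma act_coeff:
  "form_act g (a,b,c,d) (P :: nat \<Rightarrow> 'a::comm_ring_1) k = (if k \<le> g then (\<Sum>j\<le>g. P j *
     coeff ([:- of_int c, of_int d:]^j * [:of_int a, - of_int b:]^(g-j)) k) else 0)"
  by (simp add: form_act_def coeff_sum)

lemma act_stable:
  fixes P :: "nat \<Rightarrow> 'a::comm_ring_1" and q :: 'a
  assumes "s \<le> r" "q dvd of_int c" "\<forall>j. q^(fr r s j) dvd P j"
  shows "q^(fr r s k) dvd form_act g (a,b,c,d) P k"
proof (cases "k \<le> g")
  case True
  have "q^(fr r s k) dvd P j * coeff ([:- of_int c, of_int d:]^j * [:of_int a, - of_int b:]^(g-j)) k" for j
  proof -
    have "q^(fr r s k) dvd q^(fr r s j + (j - k))" by (rule le_imp_power_dvd) (rule fr_ineq[OF assms(1)])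
    also have "\<dots> dvd P j * coeff ([:- of_int c, of_int d:]^j * [:of_int a, - of_int b:]^(g-j)) k"
      unfolding power_add using assms(3) coeff_U_dvd[of q "- of_int c"] assms(2) by (intro mult_dvd_mono) auto
    finally show ?thesis .
  qed
  thus ?thesis using True by (simp add: act_coeff dvd_sum)
qed (simp add: act_coeff)

lemma act_diag:
  fixes P :: "nat \<Rightarrow> 'a::comm_ring_1" and q :: 'a
  assumes "s \<le> r" "r \<le> g" "q dvd of_int c" "\<forall>j. q^(fr r s j) dvd P j"
  shows "q^(s+1) dvd form_act g (a,b,c,d) P (r-s) - P (r-s) * (of_int d^(r-s) * of_int a^(g-(r-s)))"
proof -
  define k where "k = r - s"
  define f where "f j = P j * coeff ([:- of_int c, of_int d:]^j * [:of_int a, - of_int b:]^(g-j)) k" for j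
  have kg: "k \<le> g" using assms k_def by simp
  have "form_act g (a,b,c,d) P k = f k + (\<Sum>j\<in>{..g}-{k}. f j)"
    using kg by (simp add: act_coeff f_def sum.remove)
  hence eq: "form_act g (a,b,c,d) P k - P k * (of_int d^k * of_int a^(g-k)) =
     P k * (coeff ([:- of_int c, of_int d:]^k * [:of_int a, - of_int b:]^(g-k)) k - of_int d^k * of_int a^(g-k))
     + (\<Sum>j\<in>{..g}-{k}. f j)"
    by (simp add: f_def algebra_simps)
  have t1: "q^(s+1) dvd P k * (coeff ([:- of_int c, of_int d:]^k * [:of_int a, - of_int b:]^(g-k)) k - of_int d^k * of_int a^(g-k))"
  proof -
    have "q^s dvd P k" using assms(4) fr_diag[OF assms(1)] k_def by metis
    moreover have "q dvd (coeff ([:- of_int c, of_int d:]^k * [:of_int a, - of_int b:]^(g-k)) k - of_int d^k * of_int a^(g-k))"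
      using coeff_U_diag[of q "- of_int c" "of_int d" k "[:of_int a, - of_int b:]^(g-k)"] assms(3)
      by (simp add: coeff_0_power)
    ultimately show ?thesis using mult_dvd_mono by (metis power_Suc2 Suc_eq_plus1)
  qed
  have t2: "q^(s+1) dvd f j" if "j \<noteq> k" for j
  proof -
    have "q^(s+1) dvd q^(fr r s j + (j - k))" by (rule le_imp_power_dvd) (use fr_ineq2[OF assms(1)] that k_def in auto)
    also have "\<dots> dvd f j"
      unfolding power_add f_def using assms(4) coeff_U_dvd[of q "- of_int c"] assms(3) by (intro mult_dvd_mono) auto
    finally show ?thesis .
  qed
  have "q^(s+1) dvd (\<Sum>j\<in>{..g}-{k}. f j)" using t2 by (intro dvd_sum) auto
  with t1 eq show ?thesis unfolding k_def by simp
qed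

theorem lemma6p6:
  fixes p r s g :: nat
  assumes "prime p" and "odd p"
    and "padic_integer_ring p TYPE('a::idom)"
    and "s \<le> r" and "r \<le> g"
  shows
    "(\<forall>\<gamma>\<in>S0 p. \<forall>P\<in>(FilRS p g r s :: (nat \<Rightarrow> 'a) set). form_act g \<gamma> P \<in> FilRS p g r s)
     \<and>
     (\<exists>\<phi> :: (nat \<Rightarrow> 'a) \<Rightarrow> 'a.
        (\<forall>P\<in>FilRS p g r s. \<forall>Q\<in>FilRS p g r s.
            cong_p p (\<phi> (\<lambda>j. P j + Q j)) (\<phi> P + \<phi> Q)) \<and>
        (\<forall>P\<in>FilRS p g r s. \<forall>x::'a. cong_p p (\<phi> (\<lambda>j. x * P j)) (x * \<phi> P)) \<and>
        (\<forall>x::'a. \<exists>P\<in>FilRS p g r s. cong_p p (\<phi> P) x) \<and>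
        (\<forall>P\<in>FilRS p g r s. cong_p p (\<phi> P) 0 \<longleftrightarrow> P \<in> FilRS p g r (s + 1)) \<and>
        (\<forall>\<gamma>\<in>S0 p. \<forall>P\<in>FilRS p g r s.
           (case \<gamma> of (a, b, c, d) \<Rightarrow>
              let e = int g - 2 * int r + 2 * int s in
              cong_p p (\<phi> (form_act g \<gamma> P) * of_int a ^ nat (- e))
                       (of_int (a * d - b * c) ^ (r - s) * of_int a ^ nat e * \<phi> P))))
     \<and>
     ((\<lambda>j. if j = r - s then of_nat p ^ s else 0) \<in> (FilRS p g r s :: (nat \<Rightarrow> 'a) set))
     \<and>
     (\<forall>P\<in>(FilRS p g r s :: (nat \<Rightarrow> 'a) set). \<exists>x::'a.
        (\<lambda>j. P j - x * (if j = r - s then of_nat p ^ s else 0)) \<in> FilRS p g r (s + 1))"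
  proof -
  define q where "q = (of_nat p :: 'a)"
  have qnz: "q \<noteq> 0"
  proof
    assume "q = 0"
    hence "(of_nat p :: 'a) = of_nat 0" by (simp add: q_def)
    moreover have "inj (of_nat :: nat \<Rightarrow> 'a)" using assms(3) by (simp add: padic_integer_ring_def)
    ultimately have "p = 0" by (metis injD)
    thus False using assms(1) by simp
  qed
  hence qsnz: "q^s \<noteq> 0" by simp
  have Fs: "FilRS p g r s = {b \<in> Vg g. \<forall>j. q^(fr r s j) dvd (b j :: 'a)}"
    using FilRS_alt[of s r p g] assms(4) by (simp add: q_def)
  have Fs1: "FilRS p g r (s+1) = {b \<in> Vg g. \<forall>j. q^(fr r (s+1) j) dvd (b j :: 'a)}"
    using FilRS_alt[of "s+1" r p g] assms(4) by (simp add: q_def)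
  have cq: "q dvd of_int c" if "(a,b,c,d) \<in> S0 p" for a b c d :: int
  proof -
    from that obtain t where "c = int p * t" by (auto simp: S0_def)
    thus ?thesis by (simp add: q_def)
  qed
  have P1: "\<forall>\<gamma>\<in>S0 p. \<forall>P\<in>(FilRS p g r s :: (nat \<Rightarrow> 'a) set). form_act g \<gamma> P \<in> FilRS p g r s"
  proof (intro ballI)
    fix \<gamma> P assume g: "\<gamma> \<in> S0 p" and P: "P \<in> (FilRS p g r s :: (nat \<Rightarrow> 'a) set)"
    obtain a b c d where ge: "\<gamma> = (a,b,c,d)" by (cases \<gamma>) auto
    show "form_act g \<gamma> P \<in> FilRS p g r s" unfolding Fs ge
      using act_stable[OF assms(4) cq[of a b c d]] g ge P Fs
      by (auto simp: Vg_def act_coeff)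
  qed
  define mono where "mono = (\<lambda>j. if j = r - s then q ^ s else (0::'a))"
  have mono_in: "mono \<in> FilRS p g r s"
    unfolding Fs mono_def using assms(4,5) fr_diag[OF assms(4)] by (auto simp: Vg_def)
  define \<phi> where "\<phi> = (\<lambda>P::nat \<Rightarrow> 'a. SOME y. P (r-s) = q^s * y)"
  have phi_eq: "\<phi> P = y" if "P (r-s) = q^s * y" for P y
  proof -
    have "P (r-s) = q^s * \<phi> P" unfolding \<phi>_def by (rule someI[of _ y]) (rule that)
    with that qnz show ?thesis by simp
  qed
  have phi_spec: "P (r-s) = q^s * \<phi> P" if "P \<in> FilRS p g r s" for P
  proof -
    from that have "q^(fr r s (r-s)) dvd P (r-s)" unfolding Fs by blast
    hence "q^s dvd P (r-s)" using fr_diag[OF assms(4)] by simp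
    then obtain y where y: "P (r-s) = q^s * y" by (auto elim: dvdE)
    have "\<phi> P = y" using y by (rule phi_eq)
    with y show ?thesis by simp
  qed
  have cong_refl: "cong_p p x x" for x :: 'a by (simp add: cong_p_def)
  have kern: "q dvd \<phi> P \<longleftrightarrow> P \<in> FilRS p g r (s+1)" if P: "P \<in> FilRS p g r s" for P
  proof -
    have "P \<in> FilRS p g r (s+1) \<longleftrightarrow> q^(s+1) dvd P (r-s)"
      using P unfolding Fs Fs1 fr_succ[OF assms(4)] by (auto split: if_splits)
    also have "\<dots> \<longleftrightarrow> q^s * q dvd q^s * \<phi> P" using phi_spec[OF P] by simp
    also have "\<dots> \<longleftrightarrow> q dvd \<phi> P" using qnz by simp
    finally show ?thesis by simp
  qed
  have P2: "\<exists>\<phi> :: (nat \<Rightarrow> 'a) \<Rightarrow> 'a.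
        (\<forall>P\<in>FilRS p g r s. \<forall>Q\<in>FilRS p g r s.
            cong_p p (\<phi> (\<lambda>j. P j + Q j)) (\<phi> P + \<phi> Q)) \<and>
        (\<forall>P\<in>FilRS p g r s. \<forall>x::'a. cong_p p (\<phi> (\<lambda>j. x * P j)) (x * \<phi> P)) \<and>
        (\<forall>x::'a. \<exists>P\<in>FilRS p g r s. cong_p p (\<phi> P) x) \<and>
        (\<forall>P\<in>FilRS p g r s. cong_p p (\<phi> P) 0 \<longleftrightarrow> P \<in> FilRS p g r (s + 1)) \<and>
        (\<forall>\<gamma>\<in>S0 p. \<forall>P\<in>FilRS p g r s.
           (case \<gamma> of (a, b, c, d) \<Rightarrow>
              let e = int g - 2 * int r + 2 * int s in
              cong_p p (\<phi> (form_act g \<gamma> P) * of_int a ^ nat (- e))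
                       (of_int (a * d - b * c) ^ (r - s) * of_int a ^ nat e * \<phi> P)))"
  proof (intro exI[of _ \<phi>] conjI ballI allI)
    fix P Q :: "nat \<Rightarrow> 'a" assume P: "P \<in> FilRS p g r s" and Q: "Q \<in> FilRS p g r s"
    have "\<phi> (\<lambda>j. P j + Q j) = \<phi> P + \<phi> Q"
      by (rule phi_eq) (simp add: phi_spec[OF P] phi_spec[OF Q] algebra_simps)
    thus "cong_p p (\<phi> (\<lambda>j. P j + Q j)) (\<phi> P + \<phi> Q)" by (simp add: cong_refl)
  next
    fix P :: "nat \<Rightarrow> 'a" and x :: 'a assume P: "P \<in> FilRS p g r s"
    have "\<phi> (\<lambda>j. x * P j) = x * \<phi> P"
      by (rule phi_eq) (simp add: phi_spec[OF P] algebra_simps)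
    thus "cong_p p (\<phi> (\<lambda>j. x * P j)) (x * \<phi> P)" by (simp add: cong_refl)
  next
    fix x :: 'a
    have "(\<lambda>j. x * mono j) \<in> FilRS p g r s"
      using mono_in unfolding Fs by (auto simp: Vg_def)
    moreover have "\<phi> (\<lambda>j. x * mono j) = x" by (rule phi_eq) (simp add: mono_def)
    ultimately show "\<exists>P\<in>FilRS p g r s. cong_p p (\<phi> P) x"
      by (intro bexI[where x="\<lambda>j. x * mono j"]) (simp_all add: cong_refl)
  next
    fix P :: "nat \<Rightarrow> 'a" assume P: "P \<in> FilRS p g r s"
    show "cong_p p (\<phi> P) 0 \<longleftrightarrow> P \<in> FilRS p g r (s + 1)"
      using kern[OF P] by (simp add: cong_p_def q_def)
  next
    fix \<gamma> and P :: "nat \<Rightarrow> 'a" assume g: "\<gamma> \<in> S0 p" and P: "P \<in> FilRS p g r s"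
    obtain a b c d where ge: "\<gamma> = (a,b,c,d)" by (cases \<gamma>) auto
    define k where "k = r - s"
    define e where "e = int g - 2 * int r + 2 * int s"
    define A where "A = (of_int a :: 'a)"
    define B where "B = (of_int b :: 'a)"
    define C where "C = (of_int c :: 'a)"
    define D where "D = (of_int d :: 'a)"
    define E where "E = D^k * A^(g-k)"
    have qC: "q dvd C" using cq[of a b c d] g ge by (simp add: C_def)
    have FA: "form_act g \<gamma> P \<in> FilRS p g r s" using P1 g P by blast
    have Pfr: "\<forall>j. q^(fr r s j) dvd P j" using P unfolding Fs by auto
    have "q^(s+1) dvd form_act g \<gamma> P k - P k * E"
      using act_diag[OF assms(4,5) cq[of a b c d] Pfr] g ge by (simp add: k_def E_def A_def D_def)
    also have "form_act g \<gamma> P k - P k * E = q^s * (\<phi> (form_act g \<gamma> P) - \<phi> P * E)"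
      using phi_spec[OF FA] phi_spec[OF P] by (simp add: k_def algebra_simps)
    finally have h1: "q dvd \<phi> (form_act g \<gamma> P) - \<phi> P * E" using qnz
      by (simp add: mult.commute)
    have det: "(of_int (a * d - b * c) :: 'a) = A * D - B * C" by (simp add: A_def B_def C_def D_def)
    have "q dvd (A * D - B * C) - A * D" using qC by simp
    hence h2: "q dvd (A * D - B * C)^k - (A * D)^k" by (rule dvd_power_diff)
    have ex: "g - k + nat (- e) = k + nat e" using assms(4,5) unfolding k_def e_def by linarith
    have h3: "\<phi> P * E * A ^ nat (- e) = (A * D)^k * A ^ nat e * \<phi> P"
    proof -
      have "\<phi> P * E * A ^ nat (- e) = \<phi> P * D^k * A^(g - k + nat (- e))"
        by (simp add: E_def power_add algebra_simps)
      also have "\<dots> = \<phi> P * D^k * A^(k + nat e)" by (simp only: ex)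
      finally show ?thesis by (simp add: power_add power_mult_distrib algebra_simps)
    qed
    have "\<phi> (form_act g \<gamma> P) * A ^ nat (- e) - (A * D - B * C)^k * A ^ nat e * \<phi> P
       = (\<phi> (form_act g \<gamma> P) - \<phi> P * E) * A ^ nat (- e)
         - ((A * D - B * C)^k - (A * D)^k) * (A ^ nat e * \<phi> P)"
      using h3 by (simp add: algebra_simps)
    moreover have "q dvd (\<phi> (form_act g \<gamma> P) - \<phi> P * E) * A ^ nat (- e)
         - ((A * D - B * C)^k - (A * D)^k) * (A ^ nat e * \<phi> P)"
      by (rule dvd_diff[OF dvd_mult2[OF h1] dvd_mult2[OF h2]])
    ultimately have "q dvd \<phi> (form_act g \<gamma> P) * A ^ nat (- e) - (A * D - B * C)^k * A ^ nat e * \<phi> P"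
      by simp
    thus "case \<gamma> of (a, b, c, d) \<Rightarrow>
              let e = int g - 2 * int r + 2 * int s in
              cong_p p (\<phi> (form_act g \<gamma> P) * of_int a ^ nat (- e))
                       (of_int (a * d - b * c) ^ (r - s) * of_int a ^ nat e * \<phi> P)"
      unfolding ge using det by (simp add: cong_p_def q_def[symmetric] A_def D_def B_def C_def e_def k_def Let_def)
  qed
  have P3: "(\<lambda>j. if j = r - s then of_nat p ^ s else 0) \<in> (FilRS p g r s :: (nat \<Rightarrow> 'a) set)"
    using mono_in unfolding mono_def q_def by simp
  have P4: "\<forall>P\<in>(FilRS p g r s :: (nat \<Rightarrow> 'a) set). \<exists>x::'a.
        (\<lambda>j. P j - x * (if j = r - s then of_nat p ^ s else 0)) \<in> FilRS p g r (s + 1)"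
  proof
    fix P :: "nat \<Rightarrow> 'a" assume P: "P \<in> FilRS p g r s"
    have "(\<lambda>j. P j - \<phi> P * mono j) \<in> FilRS p g r (s + 1)"
      using P phi_spec[OF P] assms(4,5) unfolding Fs Fs1 fr_succ[OF assms(4)] mono_def
      by (auto simp: Vg_def)
    thus "\<exists>x::'a. (\<lambda>j. P j - x * (if j = r - s then of_nat p ^ s else 0)) \<in> FilRS p g r (s + 1)"
      unfolding mono_def q_def by blast
  qed
  show ?thesis using P1 P2 P3 P4 by blast
qed

end
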